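(* Let $(b_k)_{k\in\mathbb{N}_0}$ be a sequence of strictly positive real numbers. The following are equivalent: (i) $(b_k)_{k\in\mathbb{N}_0}\in\mathcal{LM}_\infty$. (ii) There is an infinitely divisible probability measure $\kappa$ on $[0,\infty]$ with $\kappa(\{0\})<1$ and $\kappa(\{\infty\})<1$ such that $b_k=\int_{[0,\infty]}e^{-kx}\,\kappa(dx)$ for all $k\in\mathbb{N}_0$ (with the convention $\infty\cdot 0=0$). (iii) For each fixed $r>0$, $(b_k^r)_{k\in\mathbb{N}_0}\in\mathcal{M}_\infty$. (iv) For each fixed $n\in\mathbb{N}$, $(b_k^{1/n})_{k\in\mathbb{N}_0}\in\mathcal{M}_\infty$.
   Context: $\nabla^jx_k:=\sum_{i=0}^j(-1)^i\binom{j}{i}x_{k+i}$. $\mathcal{M}_\infty:=\{(x_k)_{k\in\mathbb{N}_0}\in\mathbb{R}^{\mathbb{N}_0}: x_0=1,\ x_1<1,\ \nabla^jx_k\ge0\ \forall j,k\in\mathbb{N}_0\}$. $\mathcal{LM}_\infty:=\{(x_k)_{k\in\mathbb{N}_0}\in(0,\infty)^{\mathbb{N}_0}: x_0=1,\ x_1<1,\ \nabla^j\ln x_k\ge0\ \forall k\in\mathbb{N}_0,\ j\in\mathbb{N}\}$. A probability measure $\kappa$ on $[0,\infty]$ (equivalently a $[0,\infty]$-valued random variable $X$) is infinitely divisible if for every $n\ge2$ there are $n$ i.i.d. $[0,\infty]$-valued random variables whose sum (with $x+\infty=\infty$) has law $\kappa$. *)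

theory Defs
  imports "HOL-Probability.Probability"
begin

definition nabla :: "nat \<Rightarrow> (nat \<Rightarrow> real) \<Rightarrow> nat \<Rightarrow> real" where
  "nabla j x k = (\<Sum>i=0..j. (-1)^i * real (j choose i) * x (k + i))"

definition M_inf :: "(nat \<Rightarrow> real) set" where
  "M_inf = {x. x 0 = 1 \<and> x 1 < 1 \<and> (\<forall>j k. nabla j x k \<ge> 0)}"

definition LM_inf :: "(nat \<Rightarrow> real) set" where
  "LM_inf = {x. (\<forall>k. x k > 0) \<and> x 0 = 1 \<and> x 1 < 1 \<and>
                 (\<forall>k j. j \<ge> 1 \<longrightarrow> nabla j (\<lambda>i. ln (x i)) k \<ge> 0)}"

text \<open>Probability measures on [0,\<infinity>], modelled as Borel probability measures on ennreal.\<close>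
definition prob_on_ext :: "ennreal measure \<Rightarrow> bool" where
  "prob_on_ext \<kappa> \<longleftrightarrow> prob_space \<kappa> \<and> sets \<kappa> = sets borel"

text \<open>Infinite divisibility: for every n \<ge> 2 there are n i.i.d. [0,\<infinity>]-valued random
  variables (realised canonically as the coordinate projections of the n-fold product
  of a law \<mu>) whose sum (with x + \<infinity> = \<infinity>) has law \<kappa>.\<close>
definition inf_divisible :: "ennreal measure \<Rightarrow> bool" where
  "inf_divisible \<kappa> \<longleftrightarrow> prob_on_ext \<kappa> \<and>
     (\<forall>n::nat. n \<ge> 2 \<longrightarrow> (\<exists>\<mu>. prob_on_ext \<mu> \<and>
        distr (PiM {..<n} (\<lambda>_. \<mu>)) borel (\<lambda>\<omega>. \<Sum>i<n. \<omega> i) = \<kappa>))"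

text \<open>The function x \<mapsto> e^{-kx} on [0,\<infinity>] with the convention \<infinity>\<cdot>0 = 0.\<close>
definition exp_neg :: "nat \<Rightarrow> ennreal \<Rightarrow> real" where
  "exp_neg k x = (if x = \<infinity> then (if k = 0 then 1 else 0) else exp (- real k * enn2real x))"

end

theory Submission
  imports Defs "HOL-Real_Asymp.Real_Asymp"
begin


lemma nabla_Suc: "nabla (Suc j) x k = nabla j x k - nabla j x (Suc k)"
proof -
  have "nabla (Suc j) x k = (\<Sum>i\<le>Suc j. (-1)^i * real (Suc j choose i) * x (k + i))"
    by (simp add: nabla_def atLeast0AtMost)
  also have "\<dots> = x k + (\<Sum>i\<le>j. (-1)^(Suc i) * real (Suc j choose Suc i) * x (k + Suc i))"
    by (subst sum.atMost_Suc_shift) simp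
  also have "\<dots> = x k + (\<Sum>i\<le>j. (-1)^(Suc i) * real (j choose i) * x (k + Suc i))
         + (\<Sum>i\<le>j. (-1)^(Suc i) * real (j choose Suc i) * x (k + Suc i))"
    unfolding add.assoc sum.distrib[symmetric] by (rule arg_cong[where f="\<lambda>t. x k + t"], rule sum.cong, simp_all add: algebra_simps)
  also have "(\<Sum>i\<le>j. (-1)^(Suc i) * real (j choose Suc i) * x (k + Suc i))
      = (\<Sum>i\<le>Suc j. (-1)^i * real (j choose i) * x (k + i)) - x k"
    by (simp only: sum.atMost_Suc_shift) simp
  also have "(\<Sum>i\<le>Suc j. (-1)^i * real (j choose i) * x (k + i)) = nabla j x k"
    by (simp add: nabla_def atLeast0AtMost)
  also have "(\<Sum>i\<le>j. (-1)^(Suc i) * real (j choose i) * x (k + Suc i)) = - nabla j x (Suc k)"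
    by (simp add: nabla_def atLeast0AtMost sum_negf[symmetric])
  finally show ?thesis by simp
qed

lemma nabla_0[simp]: "nabla 0 x k = x k"
  by (simp add: nabla_def)

lemma nabla_shift: "nabla j (\<lambda>k. x (Suc k)) k = nabla j x (Suc k)"
  unfolding nabla_def apply (rule sum.cong) apply simp
  apply simp
  done

lemma nabla_add: "nabla j (\<lambda>k. x k + y k) k = nabla j x k + nabla j y k"
  by (simp add: nabla_def sum.distrib algebra_simps)

lemma nabla_diff: "nabla j (\<lambda>k. x k - y k) k = nabla j x k - nabla j y k"
  by (simp add: nabla_def sum_subtractf algebra_simps)

lemma nabla_cmult: "nabla j (\<lambda>k. c * x k) k = c * nabla j x k"
  by (simp add: nabla_def sum_distrib_left algebra_simps)

lemma nabla_const: "j \<ge> 1 \<Longrightarrow> nabla j (\<lambda>k. c) k = 0"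
proof (induction j)
  case (Suc j)
  have "nabla j (\<lambda>k. c) k = nabla j (\<lambda>k. c) (Suc k)" by (simp add: nabla_def)
  then show ?case by (simp add: nabla_Suc)
qed simp

lemma nabla_1: "nabla 1 x k = x k - x (Suc k)"
  using nabla_Suc[of 0 x k] by simp

lemma nabla_nabla1: "nabla j (\<lambda>k. nabla 1 x k) k = nabla (Suc j) x k"
  by (simp add: nabla_1 nabla_Suc nabla_diff nabla_shift)

lemma nabla_cong: "(\<And>k. x k = y k) \<Longrightarrow> nabla j x k = nabla j y k"
  by (simp add: nabla_def)



lemma nabla_Suc': "nabla (Suc j) x k = nabla j (\<lambda>k. x k - x (Suc k)) k"
  by (simp add: nabla_Suc nabla_diff nabla_shift)

lemma nabla_nabla1': "nabla j (nabla (Suc 0) x) k = nabla (Suc j) x k"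
  using nabla_nabla1 by simp

lemma nabla_mult_nonneg:
  "\<forall>u v. (\<forall>i\<le>j. \<forall>k. 0 \<le> nabla i u k \<and> 0 \<le> nabla i v k) \<longrightarrow> (\<forall>k. 0 \<le> nabla j (\<lambda>k. u k * v k) k)"
proof (induction j)
  case 0
  then show ?case by simp
next
  case (Suc j)
  show ?case
  proof (intro allI impI)
    fix u v :: "nat \<Rightarrow> real" and k
    assume H: "\<forall>i\<le>Suc j. \<forall>k. 0 \<le> nabla i u k \<and> 0 \<le> nabla i v k"
    have eq: "nabla (Suc j) (\<lambda>k. u k * v k) k =
       nabla j (\<lambda>k. nabla 1 u k * v k) k + nabla j (\<lambda>k. u (Suc k) * nabla 1 v k) k"
      unfolding nabla_Suc' nabla_add[symmetric]
      by (rule nabla_cong) (simp add: nabla_1 nabla_Suc algebra_simps)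
    have 1: "0 \<le> nabla j (\<lambda>k. nabla 1 u k * v k) k"
    proof -
      have "\<forall>i\<le>j. \<forall>k. 0 \<le> nabla i (nabla 1 u) k \<and> 0 \<le> nabla i v k"
        using H by (auto simp: nabla_nabla1')
      then show ?thesis using Suc.IH by blast
    qed
    have 2: "0 \<le> nabla j (\<lambda>k. u (Suc k) * nabla 1 v k) k"
    proof -
      have "\<forall>i\<le>j. \<forall>k. 0 \<le> nabla i (\<lambda>k. u (Suc k)) k \<and> 0 \<le> nabla i (nabla 1 v) k"
        using H by (auto simp: nabla_nabla1' nabla_shift)
      then show ?thesis using Suc.IH by blast
    qed
    show "0 \<le> nabla (Suc j) (\<lambda>k. u k * v k) k"
      using 1 2 eq by simp
  qed
qed

lemma nabla_exp_nonneg: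
  "\<forall>g. (\<forall>i\<ge>1. \<forall>k. 0 \<le> nabla i g k) \<longrightarrow> (\<forall>k. 0 \<le> nabla j (\<lambda>k. exp (g k)) k)"
proof (induction j rule: less_induct)
  case (less j)
  show ?case
  proof (cases j)
    case 0
    then show ?thesis by simp
  next
    case (Suc j')
    show ?thesis
    proof (intro allI impI)
      fix g :: "nat \<Rightarrow> real" and k
      assume G: "\<forall>i\<ge>1. \<forall>k. 0 \<le> nabla i g k"
      have eq: "nabla (Suc j') (\<lambda>k. exp (g k)) k =
          nabla j' (\<lambda>k. exp (g (Suc k)) * (exp (nabla 1 g k) - 1)) k"
        unfolding nabla_Suc'
        by (rule nabla_cong) (simp add: nabla_1 nabla_Suc exp_diff algebra_simps)
      have G1: "\<forall>i\<ge>1. \<forall>k. 0 \<le> nabla i (nabla 1 g) k"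
        using G by (auto simp: nabla_nabla1')
      have "\<forall>i\<le>j'. \<forall>k. 0 \<le> nabla i (\<lambda>k. exp (g (Suc k))) k \<and> 0 \<le> nabla i (\<lambda>k. exp (nabla 1 g k) - 1) k"
      proof (intro allI impI conjI)
        fix i k assume i: "i \<le> j'"
        have "i < j" using i Suc by simp
        then show "0 \<le> nabla i (\<lambda>k. exp (g (Suc k))) k"
          using less G by (simp add: nabla_shift[of i "\<lambda>k. exp (g k)", simplified])
        show "0 \<le> nabla i (\<lambda>k. exp (nabla 1 g k) - 1) k"
        proof (cases "i = 0")
          case True
          have "0 \<le> nabla 1 g k" using G by auto
          then show ?thesis using True by simp
        next
          case False
          then have "nabla i (\<lambda>k. exp (nabla 1 g k) - 1) k = nabla i (\<lambda>k. exp (nabla 1 g k)) k"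
            by (simp add: nabla_diff nabla_const)
          moreover have "0 \<le> nabla i (\<lambda>k. exp (nabla 1 g k)) k"
            using less[OF \<open>i < j\<close>] G1 by blast
          ultimately show ?thesis by simp
        qed
      qed
      then have "0 \<le> nabla j' (\<lambda>k. exp (g (Suc k)) * (exp (nabla 1 g k) - 1)) k"
        using nabla_mult_nonneg by blast
      then show "0 \<le> nabla j (\<lambda>k. exp (g k)) k" using eq Suc by simp
    qed
  qed
qed



lemma LM_imp_powr:
  assumes "b \<in> LM_inf" "r > 0"
  shows "(\<lambda>k. b k powr r) \<in> M_inf"
proof -
  have bpos: "\<And>k. b k > 0" and b0: "b 0 = 1" and b1: "b 1 < 1"
    and L: "\<And>k j. j \<ge> 1 \<Longrightarrow> nabla j (\<lambda>i. ln (b i)) k \<ge> 0"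
    using assms(1) unfolding LM_inf_def by auto
  have eq: "(\<lambda>k. b k powr r) = (\<lambda>k. exp (r * ln (b k)))"
    using bpos by (intro ext) (metis powr_def less_irrefl)
  have "\<forall>i\<ge>1. \<forall>k. 0 \<le> nabla i (\<lambda>k. r * ln (b k)) k"
    using L assms(2) by (simp add: nabla_cmult)
  then have "\<forall>j k. 0 \<le> nabla j (\<lambda>k. b k powr r) k"
    using nabla_exp_nonneg unfolding eq by blast
  moreover have "b 1 powr r < 1"
    using b1 bpos[of 1] assms(2) powr01_less_one by blast
  ultimately show ?thesis using b0 unfolding M_inf_def by simp
qed

lemma n_powr_limit:
  assumes "x > (0::real)"
  shows "(\<lambda>n. real n * (x powr (1 / real n) - 1)) \<longlonglongrightarrow> ln x"
proof -
  have "(\<lambda>n. real n * (exp (ln x / real n) - 1)) \<longlonglongrightarrow> ln x"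
    by real_asymp
  moreover have "x powr (1 / real n) = exp (ln x / real n)" for n
    using assms by (simp add: powr_def)
  ultimately show ?thesis by simp
qed

lemma iv_imp_LM:
  assumes pos: "\<forall>k. b k > 0"
    and H: "\<forall>n::nat. n \<ge> 1 \<longrightarrow> (\<lambda>k. b k powr (1 / real n)) \<in> M_inf"
  shows "b \<in> LM_inf"
proof -
  have e: "(\<lambda>k. b k powr (1 / real (1::nat))) = b" by (rule ext) (use pos in \<open>simp add: less_imp_le\<close>)
  have "(\<lambda>k. b k powr (1 / real (1::nat))) \<in> M_inf" using H[rule_format, of 1] by simp
  then have b0: "b 0 = 1" and b1: "b 1 < 1"
    unfolding e unfolding M_inf_def by auto
  have "0 \<le> nabla j (\<lambda>i. ln (b i)) k" if j: "j \<ge> 1" for j k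
  proof -
    define g where "g n k = real n * (b k powr (1 / real n) - 1)" for n k
    have lim: "(\<lambda>n. nabla j (g n) k) \<longlonglongrightarrow> nabla j (\<lambda>i. ln (b i)) k"
      unfolding nabla_def g_def
      by (intro tendsto_intros n_powr_limit) (use pos in auto)
    have "0 \<le> nabla j (g n) k" if n: "n \<ge> 1" for n
    proof -
      have "nabla j (g n) k = real n * (nabla j (\<lambda>k. b k powr (1 / real n)) k - nabla j (\<lambda>k. 1) k)"
        unfolding g_def nabla_cmult[symmetric] nabla_diff[symmetric] ..
      also have "\<dots> = real n * nabla j (\<lambda>k. b k powr (1 / real n)) k"
        using j by (simp add: nabla_const)
      finally show ?thesis using H n unfolding M_inf_def by auto
    qed
    then show ?thesis
      by (intro LIMSEQ_le_const[OF lim]) (auto intro: exI[of _ 1])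
  qed
  then show ?thesis using pos b0 b1 unfolding LM_inf_def by auto
qed



lemma integrable_bdd01:
  fixes f :: "'a \<Rightarrow> real"
  assumes "finite_measure M" "f \<in> borel_measurable M" "AE x in M. 0 \<le> f x \<and> f x \<le> 1"
  shows "integrable M (\<lambda>x. f x ^ k * (1 - f x) ^ j)"
proof -
  show ?thesis
  proof (rule finite_measure.integrable_const_bound[OF assms(1), where B=1])
    show "AE x in M. norm (f x ^ k * (1 - f x) ^ j) \<le> 1"
      using assms(3) by eventually_elim (auto simp: abs_mult power_abs intro!: mult_le_one power_le_one)
  qed (use assms(2) in simp)
qed

lemma nabla_moment:
  fixes f :: "'a \<Rightarrow> real"
  assumes "finite_measure M" "f \<in> borel_measurable M" "AE x in M. 0 \<le> f x \<and> f x \<le> 1"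
  shows "nabla j (\<lambda>k. \<integral>x. f x ^ k \<partial>M) k = (\<integral>x. f x ^ k * (1 - f x) ^ j \<partial>M)"
proof (induction j arbitrary: k)
  case 0
  then show ?case by simp
next
  case (Suc j)
  have "nabla (Suc j) (\<lambda>k. \<integral>x. f x ^ k \<partial>M) k =
      (\<integral>x. f x ^ k * (1 - f x) ^ j \<partial>M) - (\<integral>x. f x ^ Suc k * (1 - f x) ^ j \<partial>M)"
    by (simp add: nabla_Suc Suc.IH)
  also have "\<dots> = (\<integral>x. f x ^ k * (1 - f x) ^ j - f x ^ Suc k * (1 - f x) ^ j \<partial>M)"
    by (rule Bochner_Integration.integral_diff[symmetric]) (intro integrable_bdd01 assms)+
  also have "\<dots> = (\<integral>x. f x ^ k * (1 - f x) ^ Suc j \<partial>M)"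
    by (rule Bochner_Integration.integral_cong) (auto simp: algebra_simps)
  finally show ?case .
qed

lemma moment_unique_real:
  assumes M: "real_distribution M" and N: "real_distribution N"
    and SM: "AE x in M. 0 \<le> x \<and> x \<le> (1::real)" and SN: "AE x in N. 0 \<le> x \<and> x \<le> (1::real)"
    and mom: "\<And>k. (\<integral>x. x ^ k \<partial>M) = (\<integral>x. x ^ k \<partial>N)"
  shows "M = N"
proof -
  interpret M: real_distribution M by fact
  interpret N: real_distribution N by fact
  have fmM: "finite_measure M" and fmN: "finite_measure N" by unfold_locales
  have kj: "(\<integral>x. x ^ k * (1 - x) ^ j \<partial>M) = (\<integral>x. x ^ k * (1 - x) ^ j \<partial>N)" for k j
    using nabla_moment[OF fmM _ SM, of j k] nabla_moment[OF fmN _ SN, of j k] mom by simp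
  have cont_eq: "(\<integral>x. f x \<partial>M) = (\<integral>x. f x \<partial>N)"
    if fc: "continuous_on UNIV f" and fm: "f \<in> borel_measurable borel" and fb: "\<And>x. \<bar>f x\<bar> \<le> B" for f :: "real \<Rightarrow> real" and B
  proof -
    have intM: "integrable M f" by (rule M.integrable_const_bound[of _ B]) (use fb fm in auto)
    have intN: "integrable N f" by (rule N.integrable_const_bound[of _ B]) (use fb fm in auto)
    have close: "\<bar>(\<integral>x. f x \<partial>M) - (\<integral>x. f x \<partial>N)\<bar> \<le> 2 * e" if e: "e > 0" for e
    proof -
      have "continuous_on {0..1} f" using fc by (rule continuous_on_subset) auto
      from Bernstein_Weierstrass[OF this e] obtain n0 where
        n0: "\<And>n x. n0 \<le> n \<Longrightarrow> x \<in> {0..1} \<Longrightarrow> \<bar>f x - (\<Sum>k\<le>n. f(k/n) * Bernstein n k x)\<bar> < e"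
        by blast
      define P where "P x = (\<Sum>k\<le>n0. f(k/n0) * Bernstein n0 k x)" for x
      have Pm: "P \<in> borel_measurable borel" unfolding P_def Bernstein_def by measurable
      have Pint: "integrable L (\<lambda>x. f(k/n0) * Bernstein n0 k x)" if "finite_measure L" "AE x in L. 0 \<le> x \<and> x \<le> 1" "sets L = sets borel" for L k
      proof -
        have "integrable L (\<lambda>x. x ^ k * (1 - x) ^ (n0 - k))"
          using integrable_bdd01[OF that(1) measurable_ident_sets[OF that(3)] that(2)] by simp
        then have "integrable L (\<lambda>x. f(k/n0) * (real (n0 choose k) * (x ^ k * (1 - x) ^ (n0 - k))))"
          by (intro integrable_mult_right)
        then show ?thesis by (simp add: Bernstein_def mult.assoc)
      qed
      have PM: "(\<integral>x. P x \<partial>M) = (\<integral>x. P x \<partial>N)"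
      proof -
        have "(\<integral>x. P x \<partial>M) = (\<Sum>k\<le>n0. f(k/n0) * real (n0 choose k) * (\<integral>x. x ^ k * (1 - x) ^ (n0 - k) \<partial>M))"
          unfolding P_def
          by (subst Bochner_Integration.integral_sum[OF Pint[OF fmM SM M.events_eq_borel]])
             (simp_all add: Bernstein_def mult.assoc)
        also have "\<dots> = (\<Sum>k\<le>n0. f(k/n0) * real (n0 choose k) * (\<integral>x. x ^ k * (1 - x) ^ (n0 - k) \<partial>N))"
          using kj by simp
        also have "\<dots> = (\<integral>x. P x \<partial>N)"
          unfolding P_def
          by (subst Bochner_Integration.integral_sum[OF Pint[OF fmN SN N.events_eq_borel]])
             (simp_all add: Bernstein_def mult.assoc)
        finally show ?thesis .
      qed
      have bnd: "\<bar>(\<integral>x. f x \<partial>L) - (\<integral>x. P x \<partial>L)\<bar> \<le> e"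
        if L: "real_distribution L" "AE x in L. 0 \<le> x \<and> x \<le> 1" for L
      proof -
        interpret L: real_distribution L by fact
        have iP: "integrable L P" unfolding P_def
          using Pint[OF L.finite_measure_axioms L(2) L.events_eq_borel] by (intro Bochner_Integration.integrable_sum) auto
        have iF: "integrable L f" by (rule L.integrable_const_bound[of _ B]) (use fb fm in auto)
        have "\<bar>(\<integral>x. f x \<partial>L) - (\<integral>x. P x \<partial>L)\<bar> = \<bar>\<integral>x. f x - P x \<partial>L\<bar>"
          using iP iF by simp
        also have "\<dots> \<le> (\<integral>x. \<bar>f x - P x\<bar> \<partial>L)"
          using integral_norm_bound[of L "\<lambda>x. f x - P x"] by simp
        also have "\<dots> \<le> (\<integral>x. e \<partial>L)"
        proof (rule integral_mono_AE)
          show "AE x in L. \<bar>f x - P x\<bar> \<le> e"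
            using L(2) by eventually_elim (use n0[of n0] in \<open>auto simp: P_def less_imp_le\<close>)
        qed (use iP iF in auto)
        also have "\<dots> = e" using L.prob_space by simp
        finally show ?thesis .
      qed
      show ?thesis using bnd[OF M SM] bnd[OF N SN] PM by linarith
    qed
    show ?thesis
    proof (cases "(\<integral>x. f x \<partial>M) = (\<integral>x. f x \<partial>N)")
      case False
      let ?d = "\<bar>(\<integral>x. f x \<partial>M) - (\<integral>x. f x \<partial>N)\<bar>"
      have "?d > 0" using False by simp
      from close[of "?d / 4"] this show ?thesis by simp
    qed
  qed
  have step: "cdf A x \<le> cdf B x" if A: "real_distribution A" and B: "real_distribution B"
     and eq: "\<And>a b. a < b \<Longrightarrow> (\<integral>x. cts_step a b x \<partial>A) = (\<integral>x. cts_step a b x \<partial>B)" for A B x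
  proof -
    interpret A: real_distribution A by fact
    interpret B: real_distribution B by fact
    have "(cdf B \<longlongrightarrow> cdf B x) (at_right x)"
      using B.cdf_is_right_cont[of x] by (simp add: continuous_within)
    moreover have "eventually (\<lambda>y. cdf A x \<le> cdf B y) (at_right x)"
    proof -
      have "eventually (\<lambda>y. y > x) (at_right x)" by (simp add: eventually_at_right_less)
      then show ?thesis
      proof eventually_elim
        case (elim y)
        have "cdf A x \<le> (\<integral>t. cts_step x y t \<partial>A)" using A.cdf_cts_step(1)[OF elim] .
        also have "\<dots> = (\<integral>t. cts_step x y t \<partial>B)" using eq[OF elim] .
        also have "\<dots> \<le> cdf B y" using B.cdf_cts_step(2)[OF elim] .
        finally show ?case .
      qed
    qed
    ultimately show ?thesis
      by (intro tendsto_lowerbound) (auto simp: trivial_limit_at_right_real)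
  qed
  have cts: "(\<integral>t. cts_step a b t \<partial>M) = (\<integral>t. cts_step a b t \<partial>N)" if "a < b" for a b
  proof (rule cont_eq[of _ 1])
    show "continuous_on UNIV (cts_step a b)"
      using cts_step_uniformly_continuous[OF that] uniformly_continuous_imp_continuous by blast
    then show "cts_step a b \<in> borel_measurable borel"
      using borel_measurable_continuous_onI by blast
    show "\<bar>cts_step a b x\<bar> \<le> 1" for x
      using that by (auto simp: cts_step_def divide_simps)
  qed
  have "cdf M = cdf N"
    using step[OF M N cts] step[OF N M cts[symmetric]] by (intro ext antisym)
  then show ?thesis using cdf_unique M N by blast
qed



lemma nabla_binom_sum: "(\<Sum>j\<le>N. real (N choose j) * nabla (N - j) c (s + j)) = c s"
proof (induction N arbitrary: s)
  case 0
  then show ?case by simp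
next
  case (Suc N)
  have A: "(\<Sum>j\<le>Suc N. real (Suc N choose j) * nabla (Suc N - j) c (s + j))
      = nabla (Suc N) c s + (\<Sum>j\<le>N. real (N choose j) * nabla (N - j) c (s + Suc j))
          + (\<Sum>j\<le>N. real (N choose Suc j) * nabla (N - j) c (s + Suc j))"
    by (subst sum.atMost_Suc_shift) (simp add: sum.distrib algebra_simps)
  have B: "(\<Sum>j\<le>N. real (N choose j) * nabla (N - j) c (s + j))
      = (\<Sum>j\<le>N. real (N choose j) * nabla (Suc (N - j)) c (s + j))
        + (\<Sum>j\<le>N. real (N choose j) * nabla (N - j) c (s + Suc j))"
    by (simp add: nabla_Suc sum.distrib[symmetric] algebra_simps)
  have C: "(\<Sum>j\<le>N. real (N choose j) * nabla (Suc (N - j)) c (s + j))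
      = nabla (Suc N) c s + (\<Sum>j\<le>N. real (N choose Suc j) * nabla (N - j) c (s + Suc j))"
  proof -
    have "(\<Sum>j\<le>N. real (N choose j) * nabla (Suc (N - j)) c (s + j))
        = (\<Sum>j\<le>Suc N. real (N choose j) * nabla (Suc N - j) c (s + j))"
      by (simp add: Suc_diff_le)
    also have "\<dots> = nabla (Suc N) c s + (\<Sum>j\<le>N. real (N choose Suc j) * nabla (N - j) c (s + Suc j))"
      by (subst sum.atMost_Suc_shift) simp
    finally show ?thesis .
  qed
  show ?case using A B C Suc.IH[of s] by simp
qed

lemma nabla_binom_moment:
  assumes "m \<le> n"
  shows "(\<Sum>k\<le>n. real (n choose k) * real (k choose m) * nabla (n - k) c k) = real (n choose m) * c m"
proof -
  have "(\<Sum>k\<le>n. real (n choose k) * real (k choose m) * nabla (n - k) c k)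
      = (\<Sum>k\<in>{m..n}. real (n choose k) * real (k choose m) * nabla (n - k) c k)"
    by (rule sum.mono_neutral_right) auto
  also have "\<dots> = (\<Sum>j\<le>n - m. real (n choose (m + j)) * real ((m + j) choose m) * nabla (n - (m + j)) c (m + j))"
  proof -
    have "{m..n} = (\<lambda>j. m + j) ` {..n - m}"
    proof (intro equalityI subsetI)
      fix x assume "x \<in> {m..n}"
      then have "x = m + (x - m)" "x - m \<in> {..n - m}" by auto
      then show "x \<in> (\<lambda>j. m + j) ` {..n - m}" by blast
    qed (use assms in auto)
    then show ?thesis by (simp add: sum.reindex)
  qed
  also have "\<dots> = (\<Sum>j\<le>n - m. real (n choose m) * (real ((n - m) choose j) * nabla ((n - m) - j) c (m + j)))"
  proof (rule sum.cong)
    fix j assume j: "j \<in> {..n - m}"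
    have "(n choose (m + j)) * ((m + j) choose m) = (n choose m) * ((n - m) choose (m + j - m))"
      using choose_mult[of m "m + j" n] j assms by simp
    then have "real (n choose (m + j)) * real ((m + j) choose m) = real (n choose m) * real ((n - m) choose j)"
      by (metis add_diff_cancel_left' of_nat_mult)
    moreover have "n - (m + j) = (n - m) - j" by simp
    ultimately show "real (n choose (m + j)) * real ((m + j) choose m) * nabla (n - (m + j)) c (m + j)
        = real (n choose m) * (real ((n - m) choose j) * nabla ((n - m) - j) c (m + j))"
      by simp
  qed simp
  also have "\<dots> = real (n choose m) * c m"
    using nabla_binom_sum[of "n - m" c m] by (simp add: sum_distrib_left[symmetric])
  finally show ?thesis .
qed

lemma prod_approx:
  fixes a :: "nat \<Rightarrow> real"
  assumes "\<And>i. i < m \<Longrightarrow> \<bar>a i\<bar> \<le> 1" "\<bar>x\<bar> \<le> 1" "\<And>i. i < m \<Longrightarrow> \<bar>a i - x\<bar> \<le> d"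
  shows "\<bar>x ^ m - (\<Prod>i<m. a i)\<bar> \<le> real m * d"
  using assms
proof (induction m)
  case 0
  then show ?case by simp
next
  case (Suc m)
  have IH: "\<bar>x ^ m - (\<Prod>i<m. a i)\<bar> \<le> real m * d" using Suc by auto
  have d0: "0 \<le> d" using Suc.prems(3)[of 0] by (meson abs_ge_zero order_trans zero_less_Suc)
  have P: "\<bar>\<Prod>i<m. a i\<bar> \<le> 1" using Suc.prems(1)
    by (auto simp: abs_prod intro!: prod_le_1)
  have "x ^ Suc m - (\<Prod>i<Suc m. a i) = x * (x ^ m - (\<Prod>i<m. a i)) + (x - a m) * (\<Prod>i<m. a i)"
    by (simp add: algebra_simps)
  also have "\<bar>\<dots>\<bar> \<le> \<bar>x\<bar> * \<bar>x ^ m - (\<Prod>i<m. a i)\<bar> + \<bar>x - a m\<bar> * \<bar>\<Prod>i<m. a i\<bar>"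
    by (metis abs_mult abs_triangle_ineq)
  also have "\<dots> \<le> 1 * (real m * d) + d * 1"
    using Suc.prems IH P d0
    by (intro add_mono mult_mono) (auto simp: abs_minus_commute)
  finally show ?case by (simp add: algebra_simps)
qed



lemma choose_ratio:
  assumes "m \<le> n"
  shows "real (k choose m) / real (n choose m) = (\<Prod>i<m. (real k - real i) / (real n - real i))"
proof -
  have ck: "real (k choose m) = (\<Prod>i<m. real k - real i) / fact m"
    by (simp add: binomial_gbinomial gbinomial_prod_rev atLeast0LessThan)
  have cn: "real (n choose m) = (\<Prod>i<m. real n - real i) / fact m"
    by (simp add: binomial_gbinomial gbinomial_prod_rev atLeast0LessThan)
  have "(\<Prod>i<m. real n - real i) \<noteq> 0" using assms by (auto simp: prod_zero_iff)
  then show ?thesis unfolding ck cn by (simp add: prod_dividef)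
qed

lemma frac_aux1: "(0::real) < n - i \<Longrightarrow> 0 < n \<Longrightarrow> (k - i) / (n - i) - k / n = - (i * (n - k)) / (n * (n - i))"
  by (simp add: field_simps)

lemma frac_aux2: "(0::real) < D \<Longrightarrow> 0 < n \<Longrightarrow> A * n \<le> B * D \<Longrightarrow> A / D \<le> B / n"
  by (simp add: divide_simps mult.commute)

lemma ratio_approx:
  assumes "k \<le> n" "2 * m \<le> n" "n \<ge> 1"
  shows "\<bar>(real k / real n) ^ m - real (k choose m) / real (n choose m)\<bar> \<le> real m * (2 * real m / real n)"
proof -
  have n0: "real n > 0" using assms by simp
  have "\<bar>(real k / real n) ^ m - (\<Prod>i<m. (real k - real i) / (real n - real i))\<bar> \<le> real m * (2 * real m / real n)"
  proof (rule prod_approx)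
    fix i assume i: "i < m"
    have ni: "real n - real i > 0" "2 * real i \<le> real n" using i assms by auto
    show "\<bar>(real k - real i) / (real n - real i)\<bar> \<le> 1"
      using ni assms(1) by (auto simp: abs_le_iff divide_simps)
    have "(real k - real i) / (real n - real i) - real k / real n = - (real i * (real n - real k)) / (real n * (real n - real i))"
      by (rule frac_aux1[OF ni(1) n0])
    also have "\<bar>\<dots>\<bar> = (real i * (real n - real k)) / (real n * (real n - real i))"
      using ni n0 assms(1) by (simp add: abs_divide abs_mult)
    also have "\<dots> \<le> (2 * real m) / real n"
    proof (rule frac_aux2)
      show "0 < real n * (real n - real i)" using ni n0 by simp
      have "real i * (real n - real k) * real n \<le> (real m * real n) * real n"
        using i assms(1) by (intro mult_right_mono mult_mono) auto
      also have "\<dots> = real m * (real n * real n)" by simp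
      also have "\<dots> \<le> real m * (2 * (real n * (real n - real i)))"
        using ni by (intro mult_left_mono) (auto simp: algebra_simps)
      finally show "real i * (real n - real k) * real n \<le> 2 * real m * (real n * (real n - real i))"
        by simp
    qed (use n0 in simp)
    finally show "\<bar>(real k - real i) / (real n - real i) - real k / real n\<bar> \<le> 2 * real m / real n" .
  next
    show "\<bar>real k / real n\<bar> \<le> 1" using assms n0 by simp
  qed
  then show ?thesis using choose_ratio[of m n k] assms by simp
qed

definition pw :: "(nat \<Rightarrow> real) \<Rightarrow> nat \<Rightarrow> nat \<Rightarrow> real" where
  "pw c n k = (if k \<le> n then real (n choose k) * nabla (n - k) c k else 0)"

lemma pw_nonneg: "\<forall>j k. 0 \<le> nabla j c k \<Longrightarrow> 0 \<le> pw c n k"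
  by (simp add: pw_def)

lemma pw_sum: "(\<Sum>k\<le>n. pw c n k) = c 0"
  using nabla_binom_moment[of 0 n c] by (simp add: pw_def)

lemma abs_mult_bound_aux: "0 \<le> (p::real) \<Longrightarrow> \<bar>d\<bar> \<le> B \<Longrightarrow> \<bar>p * d\<bar> \<le> p * B"
  by (simp add: abs_mult mult_left_mono)

lemma moment_conv:
  assumes CM: "\<forall>j k. 0 \<le> nabla j c k" and c0: "c 0 = 1"
  shows "(\<lambda>n. \<Sum>k\<le>n. pw c n k * (real k / real n) ^ m) \<longlonglongrightarrow> c m"
proof -
  have "(\<lambda>n. (\<Sum>k\<le>n. pw c n k * (real k / real n) ^ m) - c m) \<longlonglongrightarrow> 0"
  proof (rule Lim_null_comparison)
    show "(\<lambda>n. real m * (2 * real m / real n)) \<longlonglongrightarrow> 0"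
      by (intro tendsto_mult_right_zero tendsto_divide_0[OF tendsto_const] filterlim_at_top_imp_at_infinity[OF filterlim_real_sequentially])
    show "\<forall>\<^sub>F n in sequentially. norm ((\<Sum>k\<le>n. pw c n k * (real k / real n) ^ m) - c m) \<le> real m * (2 * real m / real n)"
      using eventually_ge_at_top[of "2 * m + 1"]
    proof eventually_elim
      case (elim n)
      then have mn: "m \<le> n" "2 * m \<le> n" "n \<ge> 1" by auto
      have cn: "real (n choose m) > 0" using mn by simp
      have "(\<Sum>k\<le>n. pw c n k * real (k choose m)) = (\<Sum>k\<le>n. real (n choose k) * real (k choose m) * nabla (n - k) c k)"
        by (rule sum.cong) (auto simp: pw_def)
      also have "\<dots> = real (n choose m) * c m" by (rule nabla_binom_moment[OF mn(1)])
      finally have h1: "(\<Sum>k\<le>n. pw c n k * real (k choose m)) = real (n choose m) * c m" .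
      have "(\<Sum>k\<le>n. pw c n k * (real (k choose m) / real (n choose m))) = (\<Sum>k\<le>n. pw c n k * real (k choose m)) / real (n choose m)"
        by (simp add: sum_divide_distrib)
      then have eqc: "c m = (\<Sum>k\<le>n. pw c n k * (real (k choose m) / real (n choose m)))"
        using h1 cn by simp
      have "norm ((\<Sum>k\<le>n. pw c n k * (real k / real n) ^ m) - c m)
          = norm (\<Sum>k\<le>n. pw c n k * ((real k / real n) ^ m - real (k choose m) / real (n choose m)))"
        by (subst eqc) (simp only: sum_subtractf[symmetric] right_diff_distrib)
      also have "\<dots> \<le> (\<Sum>k\<le>n. \<bar>pw c n k * ((real k / real n) ^ m - real (k choose m) / real (n choose m))\<bar>)"
        unfolding real_norm_def by (rule sum_abs)
      also have "\<dots> \<le> (\<Sum>k\<le>n. pw c n k * (real m * (2 * real m / real n)))"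
      proof (rule sum_mono)
        fix k assume "k \<in> {..n}"
        then have "k \<le> n" by simp
        then have "\<bar>(real k / real n) ^ m - real (k choose m) / real (n choose m)\<bar> \<le> real m * (2 * real m / real n)"
          by (rule ratio_approx[OF _ mn(2,3)])
        then show "\<bar>pw c n k * ((real k / real n) ^ m - real (k choose m) / real (n choose m))\<bar> \<le> pw c n k * (real m * (2 * real m / real n))"
          by (rule abs_mult_bound_aux[OF pw_nonneg[OF CM]])
      qed
      also have "\<dots> = (\<Sum>k\<le>n. pw c n k) * (real m * (2 * real m / real n))"
        by (rule sum_distrib_right[symmetric])
      also have "\<dots> = real m * (2 * real m / real n)"
        using pw_sum[of c n] c0 by simp
      finally show ?case .
    qed
  qed
  then show ?thesis by (rule LIM_zero_cancel)
qed



lemma pw_pmf_ok: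
  assumes CM: "\<forall>j k. 0 \<le> nabla j c k" and c0: "c 0 = 1"
  shows "(\<integral>\<^sup>+k. ennreal (pw c n k) \<partial>count_space UNIV) = 1"
proof -
  have "(\<integral>\<^sup>+k. ennreal (pw c n k) \<partial>count_space UNIV) = (\<Sum>k\<le>n. ennreal (pw c n k))"
    by (rule nn_integral_count_space') (auto simp: pw_def)
  also have "\<dots> = ennreal (\<Sum>k\<le>n. pw c n k)"
    using pw_nonneg[OF CM] by (simp add: sum_ennreal)
  also have "\<dots> = 1" using pw_sum[of c n] c0 by simp
  finally show ?thesis .
qed

definition pwm :: "(nat \<Rightarrow> real) \<Rightarrow> nat \<Rightarrow> real measure" where
  "pwm c n = distr (measure_pmf (embed_pmf (pw c n))) borel (\<lambda>k. real k / real n)"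

lemma pwm_facts:
  assumes CM: "\<forall>j k. 0 \<le> nabla j c k" and c0: "c 0 = 1"
  shows "real_distribution (pwm c n)"
    and "AE x in pwm c n. 0 \<le> x \<and> x \<le> 1"
    and "\<And>f. f \<in> borel_measurable borel \<Longrightarrow> (\<integral>x. f x \<partial>pwm c n) = (\<Sum>k\<le>n. f (real k / real n) * pw c n k)"
proof -
  let ?P = "embed_pmf (pw c n)"
  have nn: "\<And>k. 0 \<le> pw c n k" using pw_nonneg[OF CM] .
  note ok = pw_pmf_ok[OF CM c0, of n]
  have pmfP: "pmf ?P k = pw c n k" for k by (rule pmf_embed_pmf[OF nn ok])
  have setP: "set_pmf ?P \<subseteq> {..n}"
    using pmfP by (auto simp: set_pmf_eq pw_def)
  show "real_distribution (pwm c n)"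
    unfolding pwm_def by (rule prob_space.real_distribution_distr) (auto intro: measure_pmf.prob_space_axioms)
  show "AE x in pwm c n. 0 \<le> x \<and> x \<le> 1"
    unfolding pwm_def
  proof (subst AE_distr_iff)
    show "AE x in measure_pmf ?P. 0 \<le> real x / real n \<and> real x / real n \<le> 1"
      unfolding AE_measure_pmf_iff using setP by (auto simp: divide_simps)
  qed auto
  fix f :: "real \<Rightarrow> real" assume fm: "f \<in> borel_measurable borel"
  have "(\<integral>x. f x \<partial>pwm c n) = (\<integral>k. f (real k / real n) \<partial>measure_pmf ?P)"
    unfolding pwm_def by (rule integral_distr) (use fm in auto)
  also have "\<dots> = (\<Sum>k\<le>n. f (real k / real n) * pmf ?P k)"
    by (rule integral_measure_pmf_real) (use setP in auto)
  also have "\<dots> = (\<Sum>k\<le>n. f (real k / real n) * pw c n k)"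
    by (simp add: pmfP)
  finally show "(\<integral>x. f x \<partial>pwm c n) = (\<Sum>k\<le>n. f (real k / real n) * pw c n k)" .
qed



definition clamp01 :: "real \<Rightarrow> real" where "clamp01 y = max 0 (min 1 y)"

lemma clamp01_cont: "isCont clamp01 x"
  unfolding clamp01_def by (intro continuous_intros)

lemma hausdorff_real:
  assumes CM: "\<forall>j k. 0 \<le> nabla j c k" and c0: "c 0 = 1"
  shows "\<exists>M. real_distribution M \<and> (AE x in M. 0 \<le> x \<and> x \<le> 1) \<and> (\<forall>m. (\<integral>x. x ^ m \<partial>M) = c m)"
proof -
  let ?mu = "pwm c"
  note F = pwm_facts[OF CM c0]
  have tight: "tight ?mu"
    unfolding tight_def
  proof (intro conjI allI impI)
    fix n show "real_distribution (?mu n)" by (rule F(1))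
  next
    fix e :: real assume e: "e > 0"
    have "1 - e < measure (?mu n) {-1<..(1::real)}" for n
    proof -
      interpret real_distribution "?mu n" by (rule F(1))
      have ae: "AE x in ?mu n. x \<in> {-1<..1}" using F(2)[of n] by eventually_elim auto
      have "{-1<..1::real} = {x. - 1 < x \<and> x \<le> 1}" by auto
      then have "measure (?mu n) {-1<..1} = 1"
        using prob_Collect_eq_1[of "\<lambda>x. x \<in> {-1<..1}"] ae by simp
      then show ?thesis using e by simp
    qed
    then show "\<exists>a b. a < b \<and> (\<forall>n. 1 - e < measure (?mu n) {a<..b})"
      by (intro exI[of _ "-1::real"] exI[of _ "1::real"]) auto
  qed
  obtain r M where r: "strict_mono r" and M: "real_distribution M" and wc: "weak_conv_m (?mu \<circ> id \<circ> r) M"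
    using tight_imp_convergent_subsubsequence[OF tight, of id] by (auto simp: strict_mono_def)
  have conv: "(\<lambda>n. \<integral>x. f x \<partial>?mu (r n)) \<longlonglongrightarrow> (\<integral>x. f x \<partial>M)"
    if "\<And>x. isCont f x" "\<And>x. norm (f x) \<le> B" for f :: "real \<Rightarrow> real" and B
    using weak_conv_imp_integral_bdd_continuous_conv[of "?mu \<circ> id \<circ> r" M f B] F(1) M wc that
    by (simp add: comp_def)
  interpret M: real_distribution M by fact
  define g where "g y = min 1 (max 0 (- y) + max 0 (y - 1))" for y :: real
  have gc: "isCont g x" for x unfolding g_def by (intro continuous_intros)
  have gm: "g \<in> borel_measurable borel" unfolding g_def by measurable
  have "(\<lambda>n. \<integral>x. g x \<partial>?mu (r n)) \<longlonglongrightarrow> (\<integral>x. g x \<partial>M)"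
    by (rule conv[of g 1]) (use gc in \<open>auto simp: g_def\<close>)
  moreover have "(\<integral>x. g x \<partial>?mu n) = 0" for n
  proof -
    have ae: "AE x in ?mu n. g x = 0" using F(2)[of n] by eventually_elim (auto simp: g_def)
    have gm': "g \<in> borel_measurable (?mu n)"
      using gm measurable_cong_sets[OF real_distribution.events_eq_borel[OF F(1)] refl] by blast
    have "(\<integral>x. g x \<partial>?mu n) = (\<integral>x. 0 \<partial>?mu n)"
      by (rule integral_cong_AE[OF gm' _ ae]) simp
    then show ?thesis by simp
  qed
  ultimately have gi0: "(\<integral>x. g x \<partial>M) = 0" by (simp add: LIMSEQ_const_iff)
  have gint: "integrable M g"
    by (rule M.integrable_const_bound[where B=1]) (use gm in \<open>auto simp: g_def\<close>)
  have g0: "AE x in M. 0 \<le> g x" by (simp add: g_def)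
  have "AE x in M. g x = 0"
    using integral_nonneg_eq_0_iff_AE[OF gint g0] gi0 by blast
  then have SM: "AE x in M. 0 \<le> x \<and> x \<le> 1"
    by eventually_elim (auto simp: g_def split: if_splits)
  have mom: "(\<integral>x. x ^ m \<partial>M) = c m" for m
  proof -
    let ?f = "\<lambda>y. clamp01 y ^ m"
    have fm: "?f \<in> borel_measurable borel" unfolding clamp01_def by measurable
    have "(\<lambda>n. \<integral>x. ?f x \<partial>?mu (r n)) \<longlonglongrightarrow> (\<integral>x. ?f x \<partial>M)"
      by (rule conv[of _ 1]) (auto intro!: continuous_intros clamp01_cont simp: clamp01_def abs_le_iff power_le_one)
    moreover have "(\<lambda>n. \<integral>x. ?f x \<partial>?mu n) \<longlonglongrightarrow> c m"
    proof -
      have "(\<integral>x. ?f x \<partial>?mu n) = (\<Sum>k\<le>n. pw c n k * (real k / real n) ^ m)" for n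
      proof -
        have "(\<integral>x. ?f x \<partial>?mu n) = (\<Sum>k\<le>n. ?f (real k / real n) * pw c n k)"
          by (rule F(3)[OF fm])
        also have "\<dots> = (\<Sum>k\<le>n. pw c n k * (real k / real n) ^ m)"
          by (rule sum.cong) (auto simp: clamp01_def divide_simps)
        finally show ?thesis .
      qed
      then show ?thesis using moment_conv[OF CM c0, of m] by simp
    qed
    then have "(\<lambda>n. \<integral>x. ?f x \<partial>?mu (r n)) \<longlonglongrightarrow> c m"
      using LIMSEQ_subseq_LIMSEQ[OF _ r] by (simp add: comp_def)
    ultimately have "(\<integral>x. ?f x \<partial>M) = c m" by (rule LIMSEQ_unique)
    moreover have "(\<integral>x. ?f x \<partial>M) = (\<integral>x. x ^ m \<partial>M)"
    proof (rule integral_cong_AE)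
      show "AE x in M. clamp01 x ^ m = x ^ m" using SM by eventually_elim (auto simp: clamp01_def)
      show "?f \<in> borel_measurable M" using fm measurable_cong_sets[OF M.events_eq_borel refl] by blast
    qed simp
    ultimately show ?thesis by simp
  qed
  show ?thesis using M SM mom by blast
qed



lemma exp_neg_0[simp]: "exp_neg 0 x = 1"
  by (simp add: exp_neg_def)

lemma exp_neg_zero[simp]: "exp_neg k 0 = 1"
  by (simp add: exp_neg_def)

lemma exp_neg_inf: "exp_neg k \<infinity> = (if k = 0 then 1 else 0)"
  by (simp add: exp_neg_def)

lemma exp_neg_fin: "x \<noteq> \<infinity> \<Longrightarrow> exp_neg k x = exp (- real k * enn2real x)"
  by (simp add: exp_neg_def)

lemma exp_neg_nonneg: "0 \<le> exp_neg k x"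
  by (simp add: exp_neg_def)

lemma exp_neg_le1: "exp_neg k x \<le> 1"
  by (auto simp: exp_neg_def enn2real_nonneg)

lemma exp_neg_pow: "exp_neg k x = exp_neg 1 x ^ k"
proof (cases "x = \<infinity>")
  case True then show ?thesis by (cases k) (auto simp: exp_neg_def)
next
  case False
  then show ?thesis
    by (simp add: exp_neg_def exp_of_nat_mult[symmetric])
qed

lemma exp_neg_pow'[simp]: "exp_neg (Suc 0) x ^ k = exp_neg k x"
  using exp_neg_pow[of k x] by simp

lemma exp_neg_add: "exp_neg k (a + b) = exp_neg k a * exp_neg k b"
proof (cases "a = \<infinity> \<or> b = \<infinity>")
  case True then show ?thesis by (cases k) (auto simp: exp_neg_def)
next
  case False
  then have "enn2real (a + b) = enn2real a + enn2real b"
    by (simp add: enn2real_plus top.not_eq_extremum)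
  then show ?thesis using False by (simp add: exp_neg_def algebra_simps exp_add[symmetric])
qed

lemma exp_neg_sum: "exp_neg k (\<Sum>i\<in>I. f i) = (\<Prod>i\<in>I. exp_neg k (f i))"
proof (induction I rule: infinite_finite_induct)
  case (insert x F) then show ?case by (simp add: exp_neg_add)
qed auto

lemma exp_neg_measurable[measurable]: "exp_neg k \<in> borel_measurable borel"
  unfolding exp_neg_def by measurable

definition T01 :: "real \<Rightarrow> ennreal" where
  "T01 y = (if y \<le> 0 then \<infinity> else ennreal (- ln y))"

lemma T01_measurable[measurable]: "T01 \<in> borel_measurable borel"
  unfolding T01_def by measurable

lemma exp_neg_T01: "0 \<le> y \<Longrightarrow> y \<le> 1 \<Longrightarrow> exp_neg k (T01 y) = y ^ k"
proof (cases "y = 0")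
  case True then show ?thesis by (cases k) (auto simp: T01_def exp_neg_def)
next
  case False
  assume y: "0 \<le> y" "y \<le> 1"
  then have yp: "y > 0" using False by simp
  have "- ln y \<ge> 0" using y yp by simp
  then have "T01 y \<noteq> \<infinity>" "enn2real (T01 y) = - ln y" using yp by (auto simp: T01_def)
  then have "exp_neg k (T01 y) = exp (real k * ln y)" by (simp add: exp_neg_def)
  also have "\<dots> = y ^ k" using yp by (simp add: exp_of_nat_mult)
  finally show ?thesis .
qed

lemma T01_exp_neg: "T01 (exp_neg 1 x) = x"
proof (cases "x = \<infinity>")
  case True then show ?thesis by (simp add: T01_def exp_neg_def)
next
  case False
  then show ?thesis by (simp add: T01_def exp_neg_def ennreal_enn2real top.not_eq_extremum)
qed



lemma mom_nabla_ennreal: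
  assumes "prob_on_ext \<kappa>"
  shows "0 \<le> nabla j (\<lambda>k. \<integral>x. exp_neg k x \<partial>\<kappa>) k"
proof -
  interpret prob_space \<kappa> using assms by (simp add: prob_on_ext_def)
  have sb: "sets \<kappa> = sets borel" using assms by (simp add: prob_on_ext_def)
  have m: "exp_neg 1 \<in> borel_measurable \<kappa>"
    using exp_neg_measurable measurable_cong_sets[OF sb refl] by blast
  have fm: "finite_measure \<kappa>" by unfold_locales
  have "nabla j (\<lambda>k. \<integral>x. exp_neg k x \<partial>\<kappa>) k = nabla j (\<lambda>k. \<integral>x. exp_neg 1 x ^ k \<partial>\<kappa>) k"
    by simp
  also have "\<dots> = (\<integral>x. exp_neg 1 x ^ k * (1 - exp_neg 1 x) ^ j \<partial>\<kappa>)"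
    by (rule nabla_moment[OF fm m]) (simp add: exp_neg_nonneg exp_neg_le1)
  finally show ?thesis
    by (simp, intro integral_nonneg_AE AE_I2 mult_nonneg_nonneg zero_le_power) (simp_all add: exp_neg_nonneg exp_neg_le1)
qed

lemma distr_exp_neg_facts:
  assumes "prob_on_ext \<kappa>"
  shows "real_distribution (distr \<kappa> borel (exp_neg 1))"
    and "AE x in distr \<kappa> borel (exp_neg 1). 0 \<le> x \<and> x \<le> 1"
    and "(\<integral>x. x ^ k \<partial>distr \<kappa> borel (exp_neg 1)) = (\<integral>x. exp_neg k x \<partial>\<kappa>)"
proof -
  interpret prob_space \<kappa> using assms by (simp add: prob_on_ext_def)
  have sb: "sets \<kappa> = sets borel" using assms by (simp add: prob_on_ext_def)
  have m: "exp_neg 1 \<in> borel_measurable \<kappa>"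
    using exp_neg_measurable measurable_cong_sets[OF sb refl] by blast
  show "real_distribution (distr \<kappa> borel (exp_neg 1))"
    using m by (rule real_distribution_distr)
  show "AE x in distr \<kappa> borel (exp_neg 1). 0 \<le> x \<and> x \<le> 1"
    using m by (subst AE_distr_iff) (auto simp: exp_neg_nonneg exp_neg_le1)
  show "(\<integral>x. x ^ k \<partial>distr \<kappa> borel (exp_neg 1)) = (\<integral>x. exp_neg k x \<partial>\<kappa>)"
    using m by (subst integral_distr) auto
qed

lemma unique_ennreal:
  assumes "prob_on_ext \<kappa>1" "prob_on_ext \<kappa>2"
    and eq: "\<And>k. (\<integral>x. exp_neg k x \<partial>\<kappa>1) = (\<integral>x. exp_neg k x \<partial>\<kappa>2)"
  shows "\<kappa>1 = \<kappa>2"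
proof -
  note f1 = distr_exp_neg_facts[OF assms(1)] and f2 = distr_exp_neg_facts[OF assms(2)]
  have mm: "(\<integral>x. x ^ k \<partial>distr \<kappa>1 borel (exp_neg 1)) = (\<integral>x. x ^ k \<partial>distr \<kappa>2 borel (exp_neg 1))" for k
    using f1(3)[of k] f2(3)[of k] eq[of k] by simp
  have D: "distr \<kappa>1 borel (exp_neg 1) = distr \<kappa>2 borel (exp_neg 1)"
    by (rule moment_unique_real[OF f1(1) f2(1) f1(2) f2(2) mm])
  have bk: "distr (distr K borel (exp_neg 1)) borel T01 = K" if "prob_on_ext K" for K
  proof -
    have sb: "sets K = sets borel" using that by (simp add: prob_on_ext_def)
    have m: "exp_neg 1 \<in> borel_measurable K"
      using exp_neg_measurable measurable_cong_sets[OF sb refl] by blast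
    have "distr (distr K borel (exp_neg 1)) borel T01 = distr K borel (T01 \<circ> exp_neg 1)"
      by (rule distr_distr[OF T01_measurable m])
    also have "\<dots> = distr K borel (\<lambda>x. x)"
      by (rule distr_cong) (auto simp: T01_exp_neg[simplified])
    also have "\<dots> = K" by (rule distr_id2) (simp add: sb)
    finally show ?thesis .
  qed
  show ?thesis using bk[OF assms(1)] bk[OF assms(2)] D by metis
qed

lemma exists_ennreal:
  assumes CM: "\<forall>j k. 0 \<le> nabla j c k" and c0: "c 0 = 1"
  shows "\<exists>\<kappa>. prob_on_ext \<kappa> \<and> (\<forall>k. (\<integral>x. exp_neg k x \<partial>\<kappa>) = c k)"
proof -
  obtain M where M: "real_distribution M" and SM: "AE x in M. 0 \<le> x \<and> x \<le> 1"
    and mom: "\<And>m. (\<integral>x. x ^ m \<partial>M) = c m"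
    using hausdorff_real[OF CM c0] by blast
  interpret M: real_distribution M by fact
  have mT: "T01 \<in> measurable M borel" by simp
  have "prob_on_ext (distr M borel T01)"
    unfolding prob_on_ext_def using M.prob_space_distr[OF mT] by simp
  moreover have "(\<integral>x. exp_neg k x \<partial>distr M borel T01) = c k" for k
  proof -
    have "(\<integral>x. exp_neg k x \<partial>distr M borel T01) = (\<integral>y. exp_neg k (T01 y) \<partial>M)"
      by (rule integral_distr) (simp_all)
    also have "\<dots> = (\<integral>y. y ^ k \<partial>M)"
    proof (rule integral_cong_AE)
      show "AE y in M. exp_neg k (T01 y) = y ^ k" using SM by eventually_elim (simp add: exp_neg_T01)
    qed simp_all
    finally show ?thesis using mom by simp
  qed
  ultimately show ?thesis by blast
qed

lemma ID_moment:
  assumes "prob_on_ext \<mu>"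
  shows "prob_on_ext (distr (PiM {..<n} (\<lambda>_. \<mu>)) borel (\<lambda>\<omega>. \<Sum>i<n. \<omega> i))"
    and "(\<integral>x. exp_neg k x \<partial>distr (PiM {..<n} (\<lambda>_. \<mu>)) borel (\<lambda>\<omega>. \<Sum>i<n. \<omega> i)) = (\<integral>x. exp_neg k x \<partial>\<mu>) ^ n"
proof -
  interpret prob_space \<mu> using assms by (simp add: prob_on_ext_def)
  have sb[measurable_cong]: "sets \<mu> = sets borel" using assms by (simp add: prob_on_ext_def)
  have ps: "prob_space (PiM {..<n} (\<lambda>_. \<mu>))"
    by (rule prob_space_PiM) (simp add: prob_space_axioms)
  have sm: "(\<lambda>\<omega>. \<Sum>i<n. \<omega> i) \<in> borel_measurable (PiM {..<n} (\<lambda>_. \<mu>))"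
    by measurable
  show "prob_on_ext (distr (PiM {..<n} (\<lambda>_. \<mu>)) borel (\<lambda>\<omega>. \<Sum>i<n. \<omega> i))"
    unfolding prob_on_ext_def using prob_space.prob_space_distr[OF ps sm] by simp
  interpret P: product_sigma_finite "\<lambda>_. \<mu>"
    by unfold_locales
  have "(\<integral>x. exp_neg k x \<partial>distr (PiM {..<n} (\<lambda>_. \<mu>)) borel (\<lambda>\<omega>. \<Sum>i<n. \<omega> i))
      = (\<integral>\<omega>. exp_neg k (\<Sum>i<n. \<omega> i) \<partial>PiM {..<n} (\<lambda>_. \<mu>))"
    by (rule integral_distr[OF sm]) (rule exp_neg_measurable)
  also have "\<dots> = (\<integral>\<omega>. (\<Prod>i<n. exp_neg k (\<omega> i)) \<partial>PiM {..<n} (\<lambda>_. \<mu>))"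
    by (simp add: exp_neg_sum)
  also have "\<dots> = (\<Prod>i<n. \<integral>x. exp_neg k x \<partial>\<mu>)"
  proof (rule P.product_integral_prod)
    fix i show "integrable \<mu> (exp_neg k)"
      by (rule integrable_const_bound[where B=1]) (auto simp: exp_neg_nonneg exp_neg_le1)
  qed simp
  also have "\<dots> = (\<integral>x. exp_neg k x \<partial>\<mu>) ^ n" by simp
  finally show "(\<integral>x. exp_neg k x \<partial>distr (PiM {..<n} (\<lambda>_. \<mu>)) borel (\<lambda>\<omega>. \<Sum>i<n. \<omega> i)) = (\<integral>x. exp_neg k x \<partial>\<mu>) ^ n" .
qed



lemma prob_on_ext_space: "prob_on_ext K \<Longrightarrow> space K = UNIV"
  unfolding prob_on_ext_def using sets_eq_imp_space_eq[of K borel] by simp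

lemma int_point_mass:
  assumes K: "prob_on_ext K" and m: "measure K {a} = 1"
  shows "(\<integral>x. exp_neg k x \<partial>K) = exp_neg k a"
proof -
  interpret prob_space K using K by (simp add: prob_on_ext_def)
  have sb: "sets K = sets borel" using K by (simp add: prob_on_ext_def)
  have "AE x in K. x \<in> {a}" by (rule AE_prob_1[OF m])
  then have ae: "AE x in K. exp_neg k x = exp_neg k a" by eventually_elim simp
  have "(\<integral>x. exp_neg k x \<partial>K) = (\<integral>x. exp_neg k a \<partial>K)"
  proof (rule integral_cong_AE[OF _ _ ae])
    show "exp_neg k \<in> borel_measurable K" using exp_neg_measurable measurable_cong_sets[OF sb refl] by blast
  qed simp
  then show ?thesis by (simp add: prob_space)
qed

lemma exp_neg_1_eq_1: "exp_neg 1 x = 1 \<Longrightarrow> x = 0"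
proof (cases "x = \<infinity>")
  case False
  assume "exp_neg 1 x = 1"
  then have "enn2real x = 0" using False by (simp add: exp_neg_def)
  then show ?thesis using False by (simp add: enn2real_eq_0_iff)
qed (simp add: exp_neg_def)

lemma mom1_less:
  assumes K: "prob_on_ext K" and m: "measure K {0} < 1"
  shows "(\<integral>x. exp_neg 1 x \<partial>K) < 1"
proof (rule ccontr)
  assume "\<not> ?thesis"
  then have ge: "(\<integral>x. exp_neg 1 x \<partial>K) \<ge> 1" by simp
  interpret prob_space K using K by (simp add: prob_on_ext_def)
  have sb: "sets K = sets borel" using K by (simp add: prob_on_ext_def)
  have em: "exp_neg 1 \<in> borel_measurable K" using exp_neg_measurable measurable_cong_sets[OF sb refl] by blast
  have ie: "integrable K (exp_neg 1)"
    by (rule integrable_const_bound[where B=1]) (use em in \<open>auto simp: exp_neg_nonneg exp_neg_le1\<close>)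
  have int1: "integrable K (\<lambda>x. 1 - exp_neg 1 x)" using ie by simp
  have "(\<integral>x. 1 - exp_neg 1 x \<partial>K) = 1 - (\<integral>x. exp_neg 1 x \<partial>K)"
    using ie by (simp add: prob_space)
  moreover have "(\<integral>x. 1 - exp_neg 1 x \<partial>K) \<ge> 0"
    by (intro integral_nonneg_AE) (simp add: exp_neg_le1)
  ultimately have "(\<integral>x. 1 - exp_neg 1 x \<partial>K) = 0" using ge by simp
  then have "AE x in K. 1 - exp_neg 1 x = 0"
    using integral_nonneg_eq_0_iff_AE[OF int1] by (simp add: exp_neg_le1)
  then have "AE x in K. x = 0" by eventually_elim (use exp_neg_1_eq_1 in auto)
  then have "prob {x \<in> space K. x = 0} = 1"
    by (subst prob_Collect_eq_1) (use sb in auto)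
  moreover have "{x \<in> space K. x = 0} = {0}" using prob_on_ext_space[OF K] by auto
  ultimately show False using m by simp
qed



lemma moments_in_M_inf:
  assumes K: "prob_on_ext K" and c: "\<And>k. c k = (\<integral>x. exp_neg k x \<partial>K)" and c1: "c 1 < 1"
  shows "c \<in> M_inf"
proof -
  interpret prob_space K using K by (simp add: prob_on_ext_def)
  have "c = (\<lambda>k. \<integral>x. exp_neg k x \<partial>K)" using c by (intro ext) simp
  then have "nabla j c k \<ge> 0" for j k using mom_nabla_ennreal[OF K] by simp
  moreover have "c 0 = 1" using c[of 0] by (simp add: prob_space)
  ultimately show ?thesis using c1 unfolding M_inf_def by simp
qed

lemma II_imp_IV:
  assumes pos: "\<forall>k. b k > 0"
    and ID: "inf_divisible \<kappa>" and m0: "measure \<kappa> {0} < 1"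
    and bk: "\<forall>k. b k = integral\<^sup>L \<kappa> (exp_neg k)"
    and n: "n \<ge> 1"
  shows "(\<lambda>k. b k powr (1 / real n)) \<in> M_inf"
proof -
  have K: "prob_on_ext \<kappa>" using ID by (simp add: inf_divisible_def)
  have b1: "b 1 < 1" using mom1_less[OF K m0] bk by simp
  obtain \<mu> where mu: "prob_on_ext \<mu>" and bmu: "\<And>k. b k = (\<integral>x. exp_neg k x \<partial>\<mu>) ^ n"
  proof (cases "n = 1")
    case True
    then show ?thesis using that[OF K] bk by simp
  next
    case False
    then have "n \<ge> 2" using n by simp
    then obtain \<mu> where "prob_on_ext \<mu>" and D: "distr (PiM {..<n} (\<lambda>_. \<mu>)) borel (\<lambda>\<omega>. \<Sum>i<n. \<omega> i) = \<kappa>"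
      using ID unfolding inf_divisible_def by blast
    moreover have "b k = (\<integral>x. exp_neg k x \<partial>\<mu>) ^ n" for k
      using ID_moment(2)[OF \<open>prob_on_ext \<mu>\<close>, of n k] D bk by simp
    ultimately show ?thesis using that by blast
  qed
  interpret mu: prob_space \<mu> using mu by (simp add: prob_on_ext_def)
  define c where "c k = (\<integral>x. exp_neg k x \<partial>\<mu>)" for k
  have cnn: "c k \<ge> 0" for k unfolding c_def by (intro integral_nonneg_AE) (simp add: exp_neg_nonneg)
  have cpos: "c k > 0" for k
  proof -
    have "c k ^ n = b k" using bmu[of k] by (simp add: c_def)
    then have "c k ^ n > 0" using pos by simp
    then have "c k \<noteq> 0" using n by (auto simp: power_0_left)
    then show ?thesis using cnn[of k] by simp
  qed
  have eq: "b k powr (1 / real n) = c k" for k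
  proof -
    have "b k powr (1 / real n) = (c k powr real n) powr (1 / real n)"
      using bmu[of k] cpos[of k] by (simp add: c_def powr_realpow)
    also have "\<dots> = c k" using n cpos[of k] by (simp add: powr_powr)
    finally show ?thesis .
  qed
  have c1: "c 1 < 1"
  proof (rule ccontr)
    assume "\<not> c 1 < 1"
    then have "1 \<le> c 1 ^ n" by (simp add: one_le_power)
    then show False using bmu[of 1] b1 c_def by simp
  qed
  have "c \<in> M_inf" using moments_in_M_inf[of \<mu> c] mu c1 by (simp add: c_def)
  moreover have "(\<lambda>k. b k powr (1 / real n)) = c" using eq by (intro ext) simp
  ultimately show ?thesis by simp
qed

lemma I_imp_II:
  assumes LM: "b \<in> LM_inf"
  shows "\<exists>\<kappa>. inf_divisible \<kappa> \<and> measure \<kappa> {0} < 1 \<and> measure \<kappa> {\<infinity>} < 1 \<and>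
                 (\<forall>k. b k = integral\<^sup>L \<kappa> (exp_neg k))"
proof -
  have bpos: "\<And>k. b k > 0" and b1: "b 1 < 1" using LM unfolding LM_inf_def by auto
  have ex: "\<exists>K. prob_on_ext K \<and> (\<forall>k. (\<integral>x. exp_neg k x \<partial>K) = b k powr (1 / real n))" if "n \<ge> 1" for n
  proof -
    have "(\<lambda>k. b k powr (1 / real n)) \<in> M_inf" using LM_imp_powr[OF LM] that by simp
    then show ?thesis using exists_ennreal[of "\<lambda>k. b k powr (1 / real n)"] unfolding M_inf_def by auto
  qed
  obtain \<kappa> where K: "prob_on_ext \<kappa>" and Km: "\<And>k. (\<integral>x. exp_neg k x \<partial>\<kappa>) = b k"
    using ex[of 1] bpos by (auto simp: less_imp_le)
  have ID: "inf_divisible \<kappa>"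
    unfolding inf_divisible_def
  proof (intro conjI allI impI K)
    fix n :: nat assume n: "n \<ge> 2"
    obtain \<mu> where mu: "prob_on_ext \<mu>" and mm: "\<And>k. (\<integral>x. exp_neg k x \<partial>\<mu>) = b k powr (1 / real n)"
      using ex[of n] n by auto
    have "distr (PiM {..<n} (\<lambda>_. \<mu>)) borel (\<lambda>\<omega>. \<Sum>i<n. \<omega> i) = \<kappa>"
    proof (rule unique_ennreal[OF ID_moment(1)[OF mu] K])
      fix k
      have "(b k powr (1 / real n)) ^ n = b k"
        using bpos[of k] n by (simp add: powr_realpow[symmetric] powr_powr)
      then show "(\<integral>x. exp_neg k x \<partial>distr (PiM {..<n} (\<lambda>_. \<mu>)) borel (\<lambda>\<omega>. \<Sum>i<n. \<omega> i)) = (\<integral>x. exp_neg k x \<partial>\<kappa>)"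
        using ID_moment(2)[OF mu, of n k] mm Km by simp
    qed
    then show "\<exists>\<mu>. prob_on_ext \<mu> \<and> distr (PiM {..<n} (\<lambda>_. \<mu>)) borel (\<lambda>\<omega>. \<Sum>i<n. \<omega> i) = \<kappa>"
      using mu by blast
  qed
  interpret prob_space \<kappa> using K by (simp add: prob_on_ext_def)
  have m0: "measure \<kappa> {0} < 1"
  proof (rule ccontr)
    assume "\<not> ?thesis"
    then have "measure \<kappa> {0} = 1" using prob_le_1 by (meson antisym not_less)
    then have "(\<integral>x. exp_neg 1 x \<partial>\<kappa>) = 1" using int_point_mass[OF K] by simp
    then show False using Km[of 1] b1 by simp
  qed
  have mi: "measure \<kappa> {\<infinity>} < 1"
  proof (rule ccontr)
    assume "\<not> ?thesis"
    then have "measure \<kappa> {\<infinity>} = 1" using prob_le_1 by (meson antisym not_less)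
    then have "(\<integral>x. exp_neg 1 x \<partial>\<kappa>) = 0" using int_point_mass[OF K, of "\<infinity>" 1] by (simp add: exp_neg_def)
    then show False using Km[of 1] bpos[of 1] by simp
  qed
  show ?thesis using ID m0 mi Km by (intro exI[of _ \<kappa>]) auto
qed

theorem proposition4p1:
  fixes b :: "nat \<Rightarrow> real"
  assumes pos: "\<forall>k. b k > 0"
  shows "(b \<in> LM_inf \<longleftrightarrow>
           (\<exists>\<kappa>. inf_divisible \<kappa> \<and> measure \<kappa> {0} < 1 \<and> measure \<kappa> {\<infinity>} < 1 \<and>
                 (\<forall>k. b k = integral\<^sup>L \<kappa> (exp_neg k))))
       \<and> (b \<in> LM_inf \<longleftrightarrow> (\<forall>r::real. r > 0 \<longrightarrow> (\<lambda>k. b k powr r) \<in> M_inf))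
       \<and> (b \<in> LM_inf \<longleftrightarrow> (\<forall>n::nat. n \<ge> 1 \<longrightarrow> (\<lambda>k. b k powr (1 / real n)) \<in> M_inf))"
proof -
  have i_iii: "b \<in> LM_inf \<Longrightarrow> (\<forall>r::real. r > 0 \<longrightarrow> (\<lambda>k. b k powr r) \<in> M_inf)"
    using LM_imp_powr by blast
  have iii_iv: "(\<forall>r::real. r > 0 \<longrightarrow> (\<lambda>k. b k powr r) \<in> M_inf) \<Longrightarrow>
      (\<forall>n::nat. n \<ge> 1 \<longrightarrow> (\<lambda>k. b k powr (1 / real n)) \<in> M_inf)"
    by simp
  have iv_i: "(\<forall>n::nat. n \<ge> 1 \<longrightarrow> (\<lambda>k. b k powr (1 / real n)) \<in> M_inf) \<Longrightarrow> b \<in> LM_inf"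
    using iv_imp_LM[OF pos] by blast
  have ii_iv: "(\<exists>\<kappa>. inf_divisible \<kappa> \<and> measure \<kappa> {0} < 1 \<and> measure \<kappa> {\<infinity>} < 1 \<and>
                 (\<forall>k. b k = integral\<^sup>L \<kappa> (exp_neg k))) \<Longrightarrow>
      (\<forall>n::nat. n \<ge> 1 \<longrightarrow> (\<lambda>k. b k powr (1 / real n)) \<in> M_inf)"
    using II_imp_IV[OF pos] by blast
  show ?thesis using i_iii iii_iv iv_i ii_iv I_imp_II by blast
qed

end
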